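(* Assume the Standing Setting below, let $\Omega$ be the set of limit points of $\{x_k\}_{k\ge0}$, and suppose $\mathcal{P}_\rho$ satisfies the KL property on $\Omega$. Then $\sum_{k=1}^\infty\|x_k-x_{k-1}\|<\infty$, and consequently $\{x_k\}_{k\ge0}$ converges to a critical point of $\mathcal{P}_\rho$.
   Context: Standing Setting. $f:\mathbb{R}^n\to\mathbb{R}$ and $F=(f_1,\dots,f_m)^T:\mathbb{R}^n\to\mathbb{R}^m$ are continuously differentiable; $\|\cdot\|$ is the Euclidean/spectral norm; $J_F(x)\in\mathbb{R}^{m\times n}$ is the Jacobian of $F$. The penalty function is $\mathcal{P}_\rho(x)=f(x)+\frac{\rho}{2}\|F(x)\|^2$ and $\bar{\mathcal{P}}_\rho(x;\bar x)=f(\bar x)+\langle\nabla f(\bar x),x-\bar x\rangle+\frac{\rho}{2}\|F(\bar x)+J_F(\bar x)(x-\bar x)\|^2$. Assumption 1: there is $\rho_0\ge0$ and a value for which the sublevel set $\{x: f(x)+\frac{\rho_0}{2}\|F(x)\|^2\le\cdot\}$ is nonempty and compact; $\bar L:=\inf_x\{f(x)+\frac{\rho_0}{2}\|F(x)\|^2\}$ (finite). Assumption 2 on a compact convex set $\mathcal{S}$: there are constants $L_f,M_F,L_F>0$ with $\|\nabla f(x)-\nabla f(y)\|\le L_f\|x-y\|$, $\|J_F(x)\|\le M_F$, $\|J_F(x)-J_F(y)\|\le L_F\|x-y\|$ for all $x,y\in\mathcal{S}$, and LICQ holds on $\mathcal{S}$ (i.e. $J_F(x)$ has full row rank for every $x\in\mathcal{S}$).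 Assumption 3: there is a finite $\bar\alpha$ with $f(x)\le\bar\alpha$ for all $x$ with $\|F(x)\|\le1$. Parameters: $\rho\ge\max\{1,3\rho_0\}$; $x_0$ satisfies $f(x_0)\le\bar\alpha$ and $\|F(x_0)\|^2\le\min\{1,2c_0/\rho\}$ for some $c_0>0$; $\alpha:=\bar\alpha+c_0$. LQP method: given $x_0$, $\underline\beta>0$, for $k=0,1,\dots$ choose $\beta_{k+1}\ge\underline\beta$ such that $x_{k+1}:=\arg\min_x\{\bar{\mathcal{P}}_\rho(x;x_k)+\frac{\beta_{k+1}}{2}\|x-x_k\|^2\}$ satisfies $\mathcal{P}_\rho(x_{k+1})\le\mathcal{P}_\rho(x_k)-\frac{\beta_{k+1}}{2}\|x_{k+1}-x_k\|^2$. It is assumed that all iterates $x_k$ lie in $\mathcal{S}$ and that $\underline\beta\le\beta_k\le\bar\beta<\infty$ for all $k\ge1$. Notation: $P_k=\mathcal{P}_\rho(x_k)$, $\Delta x_k=x_k-x_{k-1}$. KL property: for $\tau\in(0,\infty]$, $\Psi_\tau$ is the set of continuous concave $\varphi:[0,\tau]\to[0,\infty)$ with $\varphi(0)=0$, $\varphi$ continuously differentiable on $(0,\tau)$ and $\varphi'>0$ there. A continuously differentiable $\Phi$ taking a constant value on a set $\Omega$ satisfies the KL property on $\Omega$ if there exist $\epsilon>0$, $\tau>0$, $\varphi\in\Psi_\tau$ such that for every $x^*\in\Omega$ and every $x$ with $\mathrm{dist}(x,\Omega)<\epsilon$ and $\Phi(x^* )<\Phi(x)<\Phi(x^* )+\tau$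 one has $\varphi'(\Phi(x)-\Phi(x^* ))\,\|\nabla\Phi(x)\|\ge1$. "KL at a point $x^*$" means KL on $\Omega=\{x^*\}$. *)

theory Defs
  imports "HOL-Analysis.Analysis"
begin

definition gradient :: "('a::euclidean_space \<Rightarrow> real) \<Rightarrow> 'a \<Rightarrow> 'a" where
  "gradient \<Phi> x = (SOME g. (\<Phi> has_derivative (\<lambda>h. g \<bullet> h)) (at x))"

definition penalty :: "('a::euclidean_space \<Rightarrow> real) \<Rightarrow> ('a \<Rightarrow> 'b::euclidean_space) \<Rightarrow> real \<Rightarrow> 'a \<Rightarrow> real" where
  "penalty f F \<rho> x = f x + \<rho> / 2 * (norm (F x))\<^sup>2"

definition lin_penalty ::
  "('a::euclidean_space \<Rightarrow> real) \<Rightarrow> ('a \<Rightarrow> 'a) \<Rightarrow> ('a \<Rightarrow> 'b::euclidean_space) \<Rightarrow> ('a \<Rightarrow> ('a \<Rightarrow>\<^sub>L 'b))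
    \<Rightarrow> real \<Rightarrow> 'a \<Rightarrow> 'a \<Rightarrow> real" where
  "lin_penalty f gradf F JF \<rho> x xb =
     f xb + gradf xb \<bullet> (x - xb) + \<rho> / 2 * (norm (F xb + blinfun_apply (JF xb) (x - xb)))\<^sup>2"

definition Psi :: "real \<Rightarrow> (real \<Rightarrow> real) set" where
  "Psi \<tau> = {\<phi>. continuous_on {0..\<tau>} \<phi> \<and> concave_on {0..\<tau>} \<phi> \<and> \<phi> 0 = 0 \<and>
      (\<forall>s\<in>{0..\<tau>}. \<phi> s \<ge> 0) \<and>
      (\<forall>s\<in>{0<..<\<tau>}. \<phi> differentiable (at s) \<and> deriv \<phi> s > 0) \<and>
      continuous_on {0<..<\<tau>} (deriv \<phi>)}"

text \<open>KL property of \<Phi> on a set \<Omega> (uniformized form).\<close>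
definition KL_on :: "('a::euclidean_space \<Rightarrow> real) \<Rightarrow> 'a set \<Rightarrow> bool" where
  "KL_on \<Phi> \<Omega> \<longleftrightarrow> (\<exists>\<epsilon>>0. \<exists>\<tau>>0. \<exists>\<phi>\<in>Psi \<tau>.
      \<forall>xs\<in>\<Omega>. \<forall>x. infdist x \<Omega> < \<epsilon> \<and> \<Phi> xs < \<Phi> x \<and> \<Phi> x < \<Phi> xs + \<tau> \<longrightarrow>
        deriv \<phi> (\<Phi> x - \<Phi> xs) * norm (gradient \<Phi> x) \<ge> 1)"

definition limit_points :: "(nat \<Rightarrow> 'a::metric_space) \<Rightarrow> 'a set" where
  "limit_points x = {y. \<exists>r. strict_mono r \<and> (x \<circ> r) \<longlonglongrightarrow> y}"

end

theory Submission
  imports Defs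
begin

definition Gv :: "('a::euclidean_space \<Rightarrow> 'b::euclidean_space) \<Rightarrow> ('a \<Rightarrow> ('a \<Rightarrow>\<^sub>L 'b)) \<Rightarrow> 'a \<Rightarrow> 'a" where
  "Gv F JF y = (\<Sum>b\<in>Basis. (F y \<bullet> blinfun_apply (JF y) b) *\<^sub>R b)"

lemma Gv_inner: "Gv F JF y \<bullet> h = F y \<bullet> blinfun_apply (JF y) h"
proof -
  have "F y \<bullet> blinfun_apply (JF y) h = F y \<bullet> blinfun_apply (JF y) (\<Sum>b\<in>Basis. (h \<bullet> b) *\<^sub>R b)"
    by (simp add: euclidean_representation)
  also have "\<dots> = (\<Sum>b\<in>Basis. (h \<bullet> b) * (F y \<bullet> blinfun_apply (JF y) b))"
    by (simp add: blinfun.sum_right blinfun.scaleR_right inner_sum_right)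
  moreover have "Gv F JF y \<bullet> h = (\<Sum>b\<in>Basis. (F y \<bullet> blinfun_apply (JF y) b) * (b \<bullet> h))"
    by (simp add: Gv_def inner_sum_left)
  ultimately show ?thesis
    by (simp add: mult.commute inner_commute[of b h for b])
qed

lemma grad_unique:
  fixes \<Phi> :: "'a::euclidean_space \<Rightarrow> real"
  assumes "(\<Phi> has_derivative (\<lambda>h. g \<bullet> h)) (at y)"
  shows "gradient \<Phi> y = g"
proof -
  have "\<exists>g. (\<Phi> has_derivative (\<lambda>h. g \<bullet> h)) (at y)" using assms by blast
  then have "(\<Phi> has_derivative (\<lambda>h. gradient \<Phi> y \<bullet> h)) (at y)"
    unfolding gradient_def by (rule someI_ex)
  then have "(\<lambda>h. gradient \<Phi> y \<bullet> h) = (\<lambda>h. g \<bullet> h)"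
    using assms by (rule has_derivative_unique)
  then have "(gradient \<Phi> y - g) \<bullet> (gradient \<Phi> y - g) = 0"
    by (metis inner_diff_left diff_self)
  then show ?thesis by simp
qed

lemma penalty_deriv:
  assumes "(f has_derivative (\<lambda>h. gradf y \<bullet> h)) (at y)"
    "(F has_derivative blinfun_apply (JF y)) (at y)"
  shows "(penalty f F \<rho> has_derivative (\<lambda>h. (gradf y + \<rho> *\<^sub>R Gv F JF y) \<bullet> h)) (at y)"
proof -
  have e: "penalty f F \<rho> = (\<lambda>z. f z + \<rho> / 2 * (F z \<bullet> F z))"
    by (auto simp: penalty_def power2_norm_eq_inner fun_eq_iff)
  have "((\<lambda>z. f z + \<rho> / 2 * (F z \<bullet> F z)) has_derivative
     (\<lambda>h. gradf y \<bullet> h + \<rho> / 2 * (F y \<bullet> blinfun_apply (JF y) h + blinfun_apply (JF y) h \<bullet> F y))) (at y)"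
    by (intro derivative_intros assms)
  moreover have "(\<lambda>h. gradf y \<bullet> h + \<rho> / 2 * (F y \<bullet> blinfun_apply (JF y) h + blinfun_apply (JF y) h \<bullet> F y))
     = (\<lambda>h. (gradf y + \<rho> *\<^sub>R Gv F JF y) \<bullet> h)"
  proof
    fix h
    have "(gradf y + \<rho> *\<^sub>R Gv F JF y) \<bullet> h = gradf y \<bullet> h + \<rho> * (Gv F JF y \<bullet> h)"
      by (simp add: inner_add_left)
    also have "\<dots> = gradf y \<bullet> h + \<rho> * (F y \<bullet> blinfun_apply (JF y) h)" using Gv_inner by metis
    finally show "gradf y \<bullet> h + \<rho> / 2 * (F y \<bullet> blinfun_apply (JF y) h + blinfun_apply (JF y) h \<bullet> F y)
      = (gradf y + \<rho> *\<^sub>R Gv F JF y) \<bullet> h"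
      by (simp add: inner_commute[of "blinfun_apply (JF y) h"] algebra_simps Gv_inner)
  qed
  ultimately show ?thesis using e by simp
qed

lemma opt_cond:
  fixes x0 x1 :: "'a::euclidean_space" and JF :: "'a \<Rightarrow> ('a \<Rightarrow>\<^sub>L 'b::euclidean_space)"
  assumes "\<And>y. lin_penalty f gradf F JF \<rho> x1 x0 + \<beta> / 2 * (norm (x1 - x0))\<^sup>2
                  \<le> lin_penalty f gradf F JF \<rho> y x0 + \<beta> / 2 * (norm (y - x0))\<^sup>2"
  shows "gradf x0 \<bullet> h + \<rho> * ((F x0 + blinfun_apply (JF x0) (x1 - x0)) \<bullet> blinfun_apply (JF x0) h)
          + \<beta> * ((x1 - x0) \<bullet> h) = 0"
proof -
  define q where "q y = lin_penalty f gradf F JF \<rho> y x0 + \<beta> / 2 * (norm (y - x0))\<^sup>2" for y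
  have qe: "q = (\<lambda>y. f x0 + gradf x0 \<bullet> (y - x0) + \<rho> / 2 * ((F x0 + blinfun_apply (JF x0) (y - x0)) \<bullet> (F x0 + blinfun_apply (JF x0) (y - x0)))
       + \<beta> / 2 * ((y - x0) \<bullet> (y - x0)))"
    by (auto simp: fun_eq_iff q_def lin_penalty_def power2_norm_eq_inner)
  define D where "D h = gradf x0 \<bullet> h + \<rho> * ((F x0 + blinfun_apply (JF x0) (x1 - x0)) \<bullet> blinfun_apply (JF x0) h)
          + \<beta> * ((x1 - x0) \<bullet> h)" for h
  have "(q has_derivative D) (at x1)"
    unfolding qe
    apply (rule derivative_eq_intros refl | simp)+
    apply (auto simp: D_def fun_eq_iff inner_commute algebra_simps add_divide_distrib diff_divide_distrib)
    done
  moreover have "\<forall>y\<in>UNIV. q x1 \<le> q y" using assms by (simp add: q_def)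
  ultimately have "D = (\<lambda>v. 0)"
    using differential_zero_maxmin[of x1 UNIV q D] by auto
  then show ?thesis unfolding D_def by metis
qed

lemma inner_bound_norm:
  fixes v :: "'a::real_inner"
  assumes "\<bar>v \<bullet> v\<bar> \<le> K * norm v" "0 \<le> K"
  shows "norm v \<le> K"
proof (cases "v = 0")
  case True
  then show ?thesis using assms(2) by simp
next
  case False
  then have "norm v * norm v \<le> K * norm v" using assms by (simp add: power2_norm_eq_inner[symmetric] power2_eq_square)
  then show ?thesis using False by simp
qed

lemma grad_bound:
  fixes JF :: "'a::euclidean_space \<Rightarrow> ('a \<Rightarrow>\<^sub>L 'b::euclidean_space)"
  assumes S: "convex S" "x0 \<in> S" "x1 \<in> S"
    and FC: "\<And>y. (F has_derivative blinfun_apply (JF y)) (at y)"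
    and Lg: "\<And>y z. y \<in> S \<Longrightarrow> z \<in> S \<Longrightarrow> norm (gradf y - gradf z) \<le> Lf * norm (y - z)"
    and MJ: "\<And>y. y \<in> S \<Longrightarrow> norm (JF y) \<le> MF"
    and LJ: "\<And>y z. y \<in> S \<Longrightarrow> z \<in> S \<Longrightarrow> norm (JF y - JF z) \<le> LF * norm (y - z)"
    and BF: "\<And>y. y \<in> S \<Longrightarrow> norm (F y) \<le> B"
    and \<beta>: "0 \<le> \<beta>" "\<beta> \<le> \<beta>up" and \<rho>: "0 \<le> \<rho>" and L0: "0 \<le> Lf" "0 \<le> LF"
    and opt: "\<And>h. gradf x0 \<bullet> h + \<rho> * ((F x0 + blinfun_apply (JF x0) (x1 - x0)) \<bullet> blinfun_apply (JF x0) h)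
          + \<beta> * ((x1 - x0) \<bullet> h) = 0"
  shows "norm (gradf x1 + \<rho> *\<^sub>R Gv F JF x1) \<le> (Lf + \<rho> * (B * LF + 2 * MF * MF) + \<beta>up) * norm (x1 - x0)"
proof -
  define v where "v = gradf x1 + \<rho> *\<^sub>R Gv F JF x1"
  define d where "d = x1 - x0"
  define J0 where "J0 = blinfun_apply (JF x0)"
  define J1 where "J1 = blinfun_apply (JF x1)"
  have MF0: "0 \<le> MF" using MJ[OF S(2)] norm_ge_zero[of "JF x0"] by linarith
  have B0: "0 \<le> B" using BF[OF S(2)] norm_ge_zero[of "F x0"] by linarith
  have Fd: "norm (F x1 - F x0) \<le> MF * norm d"
    unfolding d_def
  proof (rule differentiable_bound[OF S(1) _ _ S(3) S(2)])
    fix y assume "y \<in> S"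
    show "(F has_derivative blinfun_apply (JF y)) (at y within S)" using FC has_derivative_at_withinI by blast
    show "onorm (blinfun_apply (JF y)) \<le> MF" using MJ[OF \<open>y \<in> S\<close>] by (simp add: norm_blinfun.rep_eq)
  qed
  have J0b: "norm (J0 u) \<le> MF * norm u" for u
  proof -
    have "norm (J0 u) \<le> norm (JF x0) * norm u" unfolding J0_def by (rule norm_blinfun)
    also have "\<dots> \<le> MF * norm u" using MJ[OF S(2)] by (simp add: mult_right_mono)
    finally show ?thesis .
  qed
  have key: "\<bar>v \<bullet> h\<bar> \<le> (Lf + \<rho> * (B * LF + 2 * MF * MF) + \<beta>up) * norm d * norm h" for h
  proof -
    have o: "gradf x0 \<bullet> h + \<rho> * ((F x0 + J0 d) \<bullet> J0 h) + \<beta> * (d \<bullet> h) = 0"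
      using opt[of h] unfolding d_def J0_def .
    have vh: "v \<bullet> h = gradf x1 \<bullet> h + \<rho> * (F x1 \<bullet> J1 h)"
      unfolding v_def J1_def by (simp add: inner_add_left Gv_inner)
    have i1: "(F x0 + J0 d) \<bullet> J0 h = F x0 \<bullet> J0 h + J0 d \<bullet> J0 h" by (rule inner_add_left)
    have i2: "F x1 \<bullet> (J1 h - J0 h) = F x1 \<bullet> J1 h - F x1 \<bullet> J0 h" by (rule inner_diff_right)
    have i3: "(F x1 - F x0 - J0 d) \<bullet> J0 h = F x1 \<bullet> J0 h - F x0 \<bullet> J0 h - J0 d \<bullet> J0 h"
      by (simp add: inner_diff_left)
    have i4: "(gradf x1 - gradf x0) \<bullet> h = gradf x1 \<bullet> h - gradf x0 \<bullet> h" by (rule inner_diff_left)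
    have e: "v \<bullet> h = (gradf x1 - gradf x0) \<bullet> h + \<rho> * (F x1 \<bullet> (J1 h - J0 h))
        + \<rho> * ((F x1 - F x0 - J0 d) \<bullet> J0 h) - \<beta> * (d \<bullet> h)"
      unfolding vh i2 i3 i4 using o unfolding i1 by (simp add: algebra_simps)
    have t1: "\<bar>(gradf x1 - gradf x0) \<bullet> h\<bar> \<le> Lf * norm d * norm h"
    proof -
      have "\<bar>(gradf x1 - gradf x0) \<bullet> h\<bar> \<le> norm (gradf x1 - gradf x0) * norm h" by (rule Cauchy_Schwarz_ineq2)
      also have "\<dots> \<le> Lf * norm d * norm h" using Lg[OF S(3) S(2)] by (simp add: d_def mult_right_mono)
      finally show ?thesis .
    qed
    have nJ: "norm (J1 h - J0 h) \<le> LF * norm d * norm h"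
    proof -
      have "J1 h - J0 h = blinfun_apply (JF x1 - JF x0) h" by (simp add: J0_def J1_def blinfun.diff_left)
      also have "norm \<dots> \<le> norm (JF x1 - JF x0) * norm h" by (rule norm_blinfun)
      also have "\<dots> \<le> LF * norm d * norm h" using LJ[OF S(3) S(2)] unfolding d_def by (simp add: mult_right_mono)
      finally show ?thesis .
    qed
    have t2: "\<bar>F x1 \<bullet> (J1 h - J0 h)\<bar> \<le> B * (LF * norm d * norm h)"
    proof -
      have "\<bar>F x1 \<bullet> (J1 h - J0 h)\<bar> \<le> norm (F x1) * norm (J1 h - J0 h)" by (rule Cauchy_Schwarz_ineq2)
      also have "\<dots> \<le> B * (LF * norm d * norm h)"
        by (rule mult_mono[OF BF[OF S(3)] nJ B0 norm_ge_zero])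
      finally show ?thesis .
    qed
    have n3: "norm (F x1 - F x0 - J0 d) \<le> 2 * MF * norm d"
      using Fd J0b[of d] norm_triangle_ineq4[of "F x1 - F x0" "J0 d"] by linarith
    have t3: "\<bar>(F x1 - F x0 - J0 d) \<bullet> J0 h\<bar> \<le> (2 * MF * norm d) * (MF * norm h)"
    proof -
      have "\<bar>(F x1 - F x0 - J0 d) \<bullet> J0 h\<bar> \<le> norm (F x1 - F x0 - J0 d) * norm (J0 h)" by (rule Cauchy_Schwarz_ineq2)
      also have "\<dots> \<le> (2 * MF * norm d) * (MF * norm h)"
        by (rule mult_mono[OF n3 J0b]) (use MF0 in auto)
      finally show ?thesis .
    qed
    have t4: "\<bar>\<beta> * (d \<bullet> h)\<bar> \<le> \<beta>up * (norm d * norm h)"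
    proof -
      have "\<bar>\<beta> * (d \<bullet> h)\<bar> = \<beta> * \<bar>d \<bullet> h\<bar>" using \<beta> by (simp add: abs_mult)
      also have "\<dots> \<le> \<beta>up * (norm d * norm h)"
        by (rule mult_mono[OF \<beta>(2) Cauchy_Schwarz_ineq2]) (use \<beta> in auto)
      finally show ?thesis .
    qed
    have a: "\<bar>\<rho> * (F x1 \<bullet> (J1 h - J0 h))\<bar> \<le> \<rho> * (B * (LF * norm d * norm h))"
      using t2 \<rho> by (simp add: abs_mult mult_left_mono)
    have b: "\<bar>\<rho> * ((F x1 - F x0 - J0 d) \<bullet> J0 h)\<bar> \<le> \<rho> * ((2 * MF * norm d) * (MF * norm h))"
      using t3 \<rho> by (simp add: abs_mult mult_left_mono)
    have "\<bar>v \<bullet> h\<bar> \<le> Lf * norm d * norm h + \<rho> * (B * (LF * norm d * norm h)) + \<rho> * ((2 * MF * norm d) * (MF * norm h))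
        + \<beta>up * (norm d * norm h)"
      unfolding e using t1 a b t4 by linarith
    then show ?thesis by (simp add: algebra_simps)
  qed
  have "0 \<le> (Lf + \<rho> * (B * LF + 2 * MF * MF) + \<beta>up) * norm d"
    using L0 B0 MF0 \<rho> \<beta> by simp
  then show ?thesis
    using inner_bound_norm[of v] key[of v] unfolding v_def d_def by (simp add: mult.assoc)
qed

lemma Gv_cont:
  fixes JF :: "'a::euclidean_space \<Rightarrow> ('a \<Rightarrow>\<^sub>L 'b::euclidean_space)"
  assumes "continuous_on UNIV F" "continuous_on UNIV JF"
  shows "continuous_on UNIV (Gv F JF)"
proof -
  have "continuous_on UNIV (\<lambda>y. blinfun_apply (JF y) b)" for b
    using bounded_bilinear.continuous_on[OF bounded_bilinear_blinfun_apply assms(2) continuous_on_const] .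
  then show ?thesis
    unfolding Gv_def[abs_def]
    by (intro continuous_intros assms)
qed

lemma psi_tangent:
  assumes "\<phi> \<in> Psi \<tau>" "s \<in> {0<..<\<tau>}" "t \<in> {0..\<tau>}"
  shows "deriv \<phi> s * (s - t) \<le> \<phi> s - \<phi> t"
proof -
  have cv: "convex_on {0..\<tau>} (\<lambda>x. - \<phi> x)" using assms(1) unfolding Psi_def concave_on_def by blast
  have "\<phi> differentiable (at s)" using assms(1,2) unfolding Psi_def by blast
  then have "(\<phi> has_real_derivative deriv \<phi> s) (at s)" by (simp add: DERIV_deriv_iff_real_differentiable)
  then have hd: "((\<lambda>x. - \<phi> x) has_real_derivative - deriv \<phi> s) (at s within {0..\<tau>})"
    by (rule DERIV_minus[OF has_field_derivative_at_within])
  have hi: "s \<in> interior {0..\<tau>}" using assms(2) by (simp add: interior_atLeastAtMost_real)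
  have "- deriv \<phi> s * (t - s) \<le> - \<phi> t - - \<phi> s"
    using convex_on_imp_above_tangent[OF cv connected_Icc hi assms(3) hd] by simp
  then show ?thesis by (simp add: algebra_simps)
qed

lemma amgm_step:
  fixes u v w :: real
  assumes "w\<^sup>2 \<le> u * v" "0 \<le> u" "0 \<le> v" "0 \<le> w"
  shows "2 * w \<le> u + v"
proof (rule ccontr)
  assume "\<not> ?thesis"
  then have "(u + v)\<^sup>2 < (2 * w)\<^sup>2" using assms by (intro power_strict_mono) auto
  moreover have "4 * (u * v) \<le> (u + v)\<^sup>2"
  proof -
    have "0 \<le> (u - v)\<^sup>2" by simp
    moreover have "(u + v)\<^sup>2 = (u - v)\<^sup>2 + 4 * (u * v)" by (simp add: power2_eq_square algebra_simps)
    ultimately show ?thesis by linarith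
  qed
  ultimately show False using assms(1) by (simp add: power2_eq_square)
qed

theorem lemma7:
  fixes f :: "'a::euclidean_space \<Rightarrow> real" and gradf :: "'a \<Rightarrow> 'a"
    and F :: "'a \<Rightarrow> 'b::euclidean_space" and JF :: "'a \<Rightarrow> ('a \<Rightarrow>\<^sub>L 'b)"
    and S :: "'a set" and x :: "nat \<Rightarrow> 'a" and \<beta> :: "nat \<Rightarrow> real"
    and \<rho> \<rho>0 c Lf MF LF \<alpha>bar c0 \<beta>low \<beta>up :: real
  assumes f_C1: "\<And>y. (f has_derivative (\<lambda>h. gradf y \<bullet> h)) (at y)" "continuous_on UNIV gradf"
    and F_C1: "\<And>y. (F has_derivative blinfun_apply (JF y)) (at y)" "continuous_on UNIV JF"
    \<comment> \<open>Assumption 1\<close>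
    and A1: "\<rho>0 \<ge> 0" "{y. f y + \<rho>0 / 2 * (norm (F y))\<^sup>2 \<le> c} \<noteq> {}"
      "compact {y. f y + \<rho>0 / 2 * (norm (F y))\<^sup>2 \<le> c}"
    \<comment> \<open>Assumption 2\<close>
    and A2: "compact S" "convex S" "Lf > 0" "MF > 0" "LF > 0"
      "\<And>y z. y \<in> S \<Longrightarrow> z \<in> S \<Longrightarrow> norm (gradf y - gradf z) \<le> Lf * norm (y - z)"
      "\<And>y. y \<in> S \<Longrightarrow> norm (JF y) \<le> MF"
      "\<And>y z. y \<in> S \<Longrightarrow> z \<in> S \<Longrightarrow> norm (JF y - JF z) \<le> LF * norm (y - z)"
      "\<And>y. y \<in> S \<Longrightarrow> surj (blinfun_apply (JF y))"
    \<comment> \<open>Assumption 3\<close>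
    and A3: "\<And>y. norm (F y) \<le> 1 \<Longrightarrow> f y \<le> \<alpha>bar"
    \<comment> \<open>Parameters and initial point\<close>
    and rho: "\<rho> \<ge> max 1 (3 * \<rho>0)"
    and c0: "c0 > 0"
    and x0: "f (x 0) \<le> \<alpha>bar" "(norm (F (x 0)))\<^sup>2 \<le> min 1 (2 * c0 / \<rho>)"
    \<comment> \<open>LQP iteration\<close>
    and beta_low: "\<beta>low > 0"
    and beta_bounds: "\<And>k. k \<ge> 1 \<Longrightarrow> \<beta>low \<le> \<beta> k \<and> \<beta> k \<le> \<beta>up"
    and step_min: "\<And>k y. lin_penalty f gradf F JF \<rho> (x (Suc k)) (x k) + \<beta> (Suc k) / 2 * (norm (x (Suc k) - x k))\<^sup>2
                       \<le> lin_penalty f gradf F JF \<rho> y (x k) + \<beta> (Suc k) / 2 * (norm (y - x k))\<^sup>2"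
    and step_descent: "\<And>k. penalty f F \<rho> (x (Suc k))
                       \<le> penalty f F \<rho> (x k) - \<beta> (Suc k) / 2 * (norm (x (Suc k) - x k))\<^sup>2"
    and in_S: "\<And>k. x k \<in> S"
    \<comment> \<open>KL on the set of limit points\<close>
    and KL: "KL_on (penalty f F \<rho>) (limit_points x)"
  shows "summable (\<lambda>k. norm (x (Suc k) - x k))
    \<and> (\<exists>xs. x \<longlonglongrightarrow> xs \<and> gradient (penalty f F \<rho>) xs = 0)"
proof -
  define P where "P = penalty f F \<rho>"
  have \<rho>0: "0 \<le> \<rho>" using rho by simp
  define Gr where "Gr y = gradf y + \<rho> *\<^sub>R Gv F JF y" for y
  have Pder: "(P has_derivative (\<lambda>h. Gr y \<bullet> h)) (at y)" for y
    unfolding P_def Gr_def using penalty_deriv[OF f_C1(1) F_C1(1)] .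
  have gradP: "gradient P y = Gr y" for y
    using grad_unique[OF Pder] .
  have Pcont: "continuous_on UNIV P"
    by (intro continuous_at_imp_continuous_on ballI has_derivative_continuous[OF Pder])
  have Fcont: "continuous_on UNIV F"
    by (intro continuous_at_imp_continuous_on ballI has_derivative_continuous[OF F_C1(1)])
  have Grcont: "continuous_on UNIV Gr"
    unfolding Gr_def[abs_def] by (intro continuous_intros Gv_cont[OF Fcont F_C1(2)] f_C1(2))
  have "compact (F ` S)" using compact_continuous_image[OF continuous_on_subset[OF Fcont] A2(1)] by simp
  then have "bounded (F ` S)" by (rule compact_imp_bounded)
  then obtain B where "\<forall>z\<in>F ` S. norm z \<le> B" by (auto simp: bounded_iff)
  then have B: "\<And>y. y \<in> S \<Longrightarrow> norm (F y) \<le> B" by simp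
  have "compact (P ` S)" using compact_continuous_image[OF continuous_on_subset[OF Pcont] A2(1)] by simp
  then have "bounded (P ` S)" by (rule compact_imp_bounded)
  then obtain M where "\<forall>z\<in>P ` S. norm z \<le> M" by (auto simp: bounded_iff)
  then have M: "\<And>y. y \<in> S \<Longrightarrow> \<bar>P y\<bar> \<le> M" by simp
  have betaS: "\<beta>low \<le> \<beta> (Suc k)" "\<beta> (Suc k) \<le> \<beta>up" for k using beta_bounds[of "Suc k"] by auto
  define d where "d k = norm (x (Suc k) - x k)" for k
  have d0: "0 \<le> d k" for k by (simp add: d_def)
  have desc: "\<beta>low / 2 * (d k)\<^sup>2 \<le> P (x k) - P (x (Suc k))" for k
  proof -
    have "\<beta>low / 2 * (d k)\<^sup>2 \<le> \<beta> (Suc k) / 2 * (d k)\<^sup>2"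
      using betaS(1)[of k] by (intro mult_right_mono) auto
    then show ?thesis using step_descent[of k] unfolding P_def d_def by linarith
  qed
  have dec: "P (x (Suc k)) \<le> P (x k)" for k
  proof -
    have "0 \<le> \<beta>low / 2 * (d k)\<^sup>2" using beta_low by simp
    then show ?thesis using desc[of k] by linarith
  qed
  have "decseq (\<lambda>k. P (x k))" using dec by (intro decseq_SucI) auto
  moreover have "\<forall>i. - M \<le> P (x i)"
  proof
    fix i show "- M \<le> P (x i)" using abs_le_D2[OF M[OF in_S[of i]]] by linarith
  qed
  ultimately obtain Ps where Ps: "(\<lambda>k. P (x k)) \<longlonglongrightarrow> Ps" "\<And>i. Ps \<le> P (x i)"
    using decseq_convergent by blast
  define \<Omega> where "\<Omega> = limit_points x"
  have \<Omega>val: "P a = Ps" if "a \<in> \<Omega>" for a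
  proof -
    from that obtain r where r: "strict_mono r" "(x \<circ> r) \<longlonglongrightarrow> a" unfolding \<Omega>_def limit_points_def by blast
    have "(\<lambda>n. P ((x \<circ> r) n)) \<longlonglongrightarrow> P a"
      using continuous_on_tendsto_compose[OF Pcont r(2)] by (simp add: o_def)
    moreover have "(\<lambda>n. P ((x \<circ> r) n)) \<longlonglongrightarrow> Ps"
      using LIMSEQ_subseq_LIMSEQ[OF Ps(1) r(1)] by (simp add: o_def)
    ultimately show ?thesis using LIMSEQ_unique by blast
  qed
  have seqS: "seq_compact S" using A2(1) compact_imp_seq_compact by blast
  obtain l0 r0 where "l0 \<in> S" "strict_mono r0" "(x \<circ> r0) \<longlonglongrightarrow> l0"
    using seq_compactE[OF seqS] in_S by blast
  then have l0: "l0 \<in> \<Omega>" by (auto simp: \<Omega>_def limit_points_def)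
  from KL[unfolded KL_on_def] obtain \<epsilon> \<tau> \<phi> where \<epsilon>: "\<epsilon> > 0" and \<tau>: "\<tau> > 0" and \<phi>: "\<phi> \<in> Psi \<tau>"
    and KL0: "\<forall>xs\<in>limit_points x. \<forall>y. infdist y (limit_points x) < \<epsilon> \<and> penalty f F \<rho> xs < penalty f F \<rho> y
       \<and> penalty f F \<rho> y < penalty f F \<rho> xs + \<tau> \<longrightarrow>
        deriv \<phi> (penalty f F \<rho> y - penalty f F \<rho> xs) * norm (gradient (penalty f F \<rho>) y) \<ge> 1"
    by blast
  have KLi: "deriv \<phi> (P y - P xs) * norm (gradient P y) \<ge> 1"
    if "xs \<in> \<Omega>" "infdist y \<Omega> < \<epsilon>" "P xs < P y" "P y < P xs + \<tau>" for xs y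
    using KL0 that unfolding P_def \<Omega>_def by blast
  have ev1: "\<forall>\<^sub>F k in sequentially. infdist (x k) \<Omega> < \<epsilon>"
  proof (rule ccontr)
    assume "\<not> ?thesis"
    then have "\<exists>\<^sub>F k in sequentially. \<not> infdist (x k) \<Omega> < \<epsilon>" by (simp add: not_eventually)
    then have "\<exists>\<^sub>F k in cofinite. \<not> infdist (x k) \<Omega> < \<epsilon>" unfolding cofinite_eq_sequentially .
    then have "infinite {k. \<not> infdist (x k) \<Omega> < \<epsilon>}" by (rule frequently_cofinite[THEN iffD1])
    from infinite_enumerate[OF this] obtain r :: "nat \<Rightarrow> nat" where r0: "strict_mono r \<and> (\<forall>n. r n \<in> {k. \<not> infdist (x k) \<Omega> < \<epsilon>})" ..
    then have r: "strict_mono r" "\<And>n. \<not> infdist (x (r n)) \<Omega> < \<epsilon>" by auto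
    have "\<forall>n. (x \<circ> r) n \<in> S" using in_S by simp
    then obtain l s where ls: "l \<in> S" "strict_mono s" "((x \<circ> r) \<circ> s) \<longlonglongrightarrow> l"
      by (rule seq_compactE[OF seqS])
    have sm: "strict_mono (r \<circ> s)" using r(1) ls(2) by (rule strict_mono_o)
    have eq: "x \<circ> (r \<circ> s) = (x \<circ> r) \<circ> s" by (simp add: fun_eq_iff)
    have "(x \<circ> (r \<circ> s)) \<longlonglongrightarrow> l" using ls(3) unfolding eq .
    then have lO: "l \<in> \<Omega>" unfolding \<Omega>_def limit_points_def mem_Collect_eq
      by (intro exI[of _ "r \<circ> s"] conjI sm)
    have "(\<lambda>n. dist (((x \<circ> r) \<circ> s) n) l) \<longlonglongrightarrow> 0" using ls(3) by (rule tendsto_dist_iff[THEN iffD1])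
    then have "\<forall>\<^sub>F n in sequentially. dist (((x \<circ> r) \<circ> s) n) l < \<epsilon>"
      using \<epsilon> by (rule order_tendstoD(2))
    then obtain N where "\<forall>n\<ge>N. dist (((x \<circ> r) \<circ> s) n) l < \<epsilon>" unfolding eventually_sequentially by blast
    then have "dist (x (r (s N))) l < \<epsilon>" by simp
    define n where "n = N"
    have "dist (x (r (s n))) l < \<epsilon>" unfolding n_def by fact
    moreover have "infdist (x (r (s n))) \<Omega> \<le> dist (x (r (s n))) l" using infdist_le[OF lO] .
    ultimately show False using r(2)[of "s n"] by linarith
  qed
  have ev2: "\<forall>\<^sub>F k in sequentially. P (x k) < Ps + \<tau>"
    using order_tendstoD(2)[OF Ps(1), of "Ps + \<tau>"] \<tau> by simp
  obtain K where K: "\<And>j. j \<ge> K \<Longrightarrow> infdist (x j) \<Omega> < \<epsilon> \<and> P (x j) < Ps + \<tau>"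
    using eventually_conj[OF ev1 ev2] by (auto simp: eventually_sequentially)
  define C where "C = Lf + \<rho> * (B * LF + 2 * MF * MF) + \<beta>up"
  have B0: "0 \<le> B" using B[OF in_S[of 0]] norm_ge_zero[of "F (x 0)"] by linarith
  have bup: "0 \<le> \<beta>up" using betaS[of 0] beta_low by linarith
  have C0: "0 \<le> C" unfolding C_def using A2(3,4,5) B0 \<rho>0 bup by simp
  have gb: "norm (gradient P (x (Suc k))) \<le> C * d k" for k
  proof -
    have opt: "gradf (x k) \<bullet> h + \<rho> * ((F (x k) + blinfun_apply (JF (x k)) (x (Suc k) - x k)) \<bullet> blinfun_apply (JF (x k)) h)
          + \<beta> (Suc k) * ((x (Suc k) - x k) \<bullet> h) = 0" for h
      using opt_cond[OF step_min] .
    have "0 \<le> \<beta> (Suc k)" using betaS(1)[of k] beta_low by linarith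
    from grad_bound[OF A2(2) in_S[of k] in_S[of "Suc k"] F_C1(1) A2(6) A2(7) A2(8) B this betaS(2)[of k] \<rho>0
        less_imp_le[OF A2(3)] less_imp_le[OF A2(5)] opt]
    show ?thesis unfolding gradP Gr_def C_def d_def .
  qed
  define E where "E = 2 * C / \<beta>low"
  have E0: "0 \<le> E" unfolding E_def using C0 beta_low by simp
  define a where "a j = \<phi> (P (x j) - Ps)" for j
  define c where "c k = d k + E * a (Suc k)" for k
  have \<phi>nn: "\<phi> s \<ge> 0" if "s \<in> {0..\<tau>}" for s using \<phi> that unfolding Psi_def by blast
  have \<phi>0: "\<phi> 0 = 0" using \<phi> unfolding Psi_def by blast
  have rng: "P (x j) - Ps \<in> {0..\<tau>}" if "j \<ge> K" for j using K[OF that] Ps(2)[of j] by simp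
  have c0: "0 \<le> c k" if "k \<ge> K" for k
    unfolding c_def a_def using d0[of k] E0 \<phi>nn[OF rng[of "Suc k"]] that by simp
  have step: "d (Suc k) \<le> c k - c (Suc k)" if "k \<ge> K" for k
  proof -
    define s where "s = P (x (Suc k)) - Ps"
    define t where "t = P (x (Suc (Suc k))) - Ps"
    have t0: "0 \<le> t" unfolding t_def using Ps(2) by simp
    have ts: "t \<le> s" unfolding s_def t_def using dec by simp
    have sl: "s < \<tau>" unfolding s_def using K[of "Suc k"] that by simp
    have de: "\<beta>low / 2 * (d (Suc k))\<^sup>2 \<le> s - t" using desc[of "Suc k"] by (simp add: s_def t_def)
    show ?thesis
    proof (cases "s = 0")
      case True
      then have "t = 0" using t0 ts by simp
      then have "\<beta>low / 2 * (d (Suc k))\<^sup>2 \<le> 0" using de True by simp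
      then have "(d (Suc k))\<^sup>2 \<le> 0" using beta_low by (simp add: mult_le_0_iff)
      then have "d (Suc k) = 0" by simp
      moreover have "a (Suc k) = 0" "a (Suc (Suc k)) = 0"
        using True \<open>t = 0\<close> \<phi>0 by (simp_all add: a_def s_def t_def)
      ultimately show ?thesis unfolding c_def using d0[of k] by simp
    next
      case False
      then have s0: "0 < s" using t0 ts by simp
      have Pl: "P l0 = Ps" by (rule \<Omega>val[OF l0])
      have Kk: "infdist (x (Suc k)) \<Omega> < \<epsilon>" "P (x (Suc k)) < Ps + \<tau>" using K[of "Suc k"] that by auto
      have lt: "P l0 < P (x (Suc k))" using s0 Pl unfolding s_def by linarith
      have lt2: "P (x (Suc k)) < P l0 + \<tau>" using Kk(2) Pl by linarith
      have "1 \<le> deriv \<phi> (P (x (Suc k)) - P l0) * norm (gradient P (x (Suc k)))"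
        by (rule KLi[OF l0 Kk(1) lt lt2])
      then have kl: "1 \<le> deriv \<phi> s * norm (gradient P (x (Suc k)))" unfolding Pl s_def .
      have "s \<in> {0<..<\<tau>}" using s0 sl by simp
      then have dpos: "0 < deriv \<phi> s" using \<phi> unfolding Psi_def by blast
      have kl2: "1 \<le> deriv \<phi> s * (C * d k)"
        using kl mult_left_mono[OF gb[of k] less_imp_le[OF dpos]] by linarith
      have tan: "deriv \<phi> s * (s - t) \<le> a (Suc k) - a (Suc (Suc k))"
        using psi_tangent[OF \<phi>, of s t] s0 sl t0 ts by (simp add: a_def s_def t_def)
      define w where "w = a (Suc k) - a (Suc (Suc k))"
      have "0 \<le> deriv \<phi> s * (s - t)" using dpos ts by simp
      then have w0: "0 \<le> w" unfolding w_def using tan by linarith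
      have bl2: "0 \<le> 2 / \<beta>low" using beta_low by simp
      have "(d (Suc k))\<^sup>2 = (2 / \<beta>low) * (\<beta>low / 2 * (d (Suc k))\<^sup>2)" using beta_low by simp
      also have "\<dots> \<le> (2 / \<beta>low) * (s - t)"
        by (rule mult_left_mono[OF de bl2])
      also have "\<dots> \<le> (2 / \<beta>low) * ((s - t) * (deriv \<phi> s * (C * d k)))"
      proof (rule mult_left_mono[OF _ bl2])
        have "(s - t) * 1 \<le> (s - t) * (deriv \<phi> s * (C * d k))"
          by (rule mult_left_mono[OF kl2]) (use ts in simp)
        then show "s - t \<le> (s - t) * (deriv \<phi> s * (C * d k))" by simp
      qed
      also have "\<dots> = (2 / \<beta>low) * (C * d k) * (deriv \<phi> s * (s - t))" by (simp add: algebra_simps)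
      also have "\<dots> \<le> (2 / \<beta>low) * (C * d k) * w"
        unfolding w_def by (rule mult_left_mono[OF tan]) (use bl2 C0 d0[of k] in simp)
      also have "\<dots> = d k * (E * w)" by (simp add: E_def)
      finally have "2 * d (Suc k) \<le> d k + E * w"
        by (rule amgm_step) (use d0[of k] d0[of "Suc k"] E0 w0 in simp_all)
      then show ?thesis unfolding c_def w_def by (simp add: algebra_simps)
    qed
  qed
  define c' where "c' n = c (n + K)" for n
  have "decseq c'"
  proof (rule decseq_SucI)
    fix n
    have "d (Suc (n + K)) \<le> c (n + K) - c (Suc (n + K))" by (rule step) simp
    then show "c' (Suc n) \<le> c' n" using d0[of "Suc (n + K)"] by (simp add: c'_def)
  qed
  moreover have "\<forall>i. 0 \<le> c' i" unfolding c'_def using c0 by simp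
  ultimately obtain L where "c' \<longlonglongrightarrow> L" using decseq_convergent by blast
  then have "summable (\<lambda>n. c' (Suc n) - c' n)" by (rule telescope_summable)
  then have "summable (\<lambda>n. c' n - c' (Suc n))"
    using summable_minus by fastforce
  then have "summable (\<lambda>n. d (Suc (n + K)))"
    by (rule summable_comparison_test[rotated]) (use step d0 in \<open>auto simp: c'_def\<close>)
  then have sd: "summable d"
    using summable_iff_shift[of d "Suc K"] by simp
  have "summable (\<lambda>k. x (Suc k) - x k)"
    using sd unfolding d_def by (rule summable_norm_cancel)
  then have "(\<lambda>n. \<Sum>k<n. x (Suc k) - x k) \<longlonglongrightarrow> (\<Sum>k. x (Suc k) - x k)"
    by (rule summable_LIMSEQ)
  then have "(\<lambda>n. x n - x 0) \<longlonglongrightarrow> (\<Sum>k. x (Suc k) - x k)"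
    by (simp add: sum_lessThan_telescope)
  then have "(\<lambda>n. (x n - x 0) + x 0) \<longlonglongrightarrow> (\<Sum>k. x (Suc k) - x k) + x 0"
    by (intro tendsto_intros)
  then have xl: "x \<longlonglongrightarrow> (\<Sum>k. x (Suc k) - x k) + x 0" by simp
  define xs where "xs = (\<Sum>k. x (Suc k) - x k) + x 0"
  have g1: "(\<lambda>k. gradient P (x (Suc k))) \<longlonglongrightarrow> 0"
  proof (rule Lim_null_comparison)
    show "\<forall>\<^sub>F k in sequentially. norm (gradient P (x (Suc k))) \<le> C * d k" using gb by simp
    show "(\<lambda>k. C * d k) \<longlonglongrightarrow> 0"
      using tendsto_mult_right_zero[OF summable_LIMSEQ_zero[OF sd]] by simp
  qed
  have "(\<lambda>k. x (Suc k)) \<longlonglongrightarrow> xs" using LIMSEQ_Suc[OF xl] unfolding xs_def .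
  then have "(\<lambda>k. Gr (x (Suc k))) \<longlonglongrightarrow> Gr xs"
    using continuous_on_tendsto_compose[OF Grcont] by simp
  then have "gradient P xs = 0"
    using g1 LIMSEQ_unique unfolding gradP by metis
  then show ?thesis
    using sd xl unfolding d_def P_def xs_def by blast
qed

end
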